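(* Let $n\ge 3$. Then $I(\mathring H_{2,n})\simeq\mathbb{S}^2$, $I(\mathring H_{3,n})\simeq\mathbb{S}^3$, and $I(\mathring H_{k,n})\simeq\Sigma^2 I(H_{k-2,n})$ for all $k\ge 4$.
   Context: $P_k$ is the path with vertices $u_1,\dots,u_k$; $K_n$ is the complete graph on $\{1,\dots,n\}$; $P_k\times K_n$ is the categorical product (vertices $(u_i,j)$, with $(u_i,a)$ adjacent to $(u_{i'},b)$ iff $|i-i'|=1$ and $a\ne b$). For $k\ge 2$, $H_{k,n}$ is obtained from $P_k\times K_n$ by adding new vertices $v_1,v_2$ and the edges $(u_1,i)v_1$ for all $i\ge2$ and $(u_k,i)v_2$ for all $i\ne2$; $\mathring H_{k,n}$ is obtained from $H_{k,n}$ by adding new vertices $w_1,w_2$ and the edges $v_1w_1$, $v_2w_2$. $I(G)$ is the independence complex (simplices = non-empty independent vertex sets); $\Sigma$ is suspension. *)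

theory Defs
  imports "HOL-Analysis.Analysis"
begin

text \<open>A (finite simple) graph is given by a vertex set V and an edge set E of 2-element subsets of V.\<close>

definition independence_complex :: "'a set \<Rightarrow> 'a set set \<Rightarrow> 'a set set" where
  "independence_complex V E = {S. S \<noteq> {} \<and> finite S \<and> S \<subseteq> V \<and> (\<forall>e\<in>E. \<not> e \<subseteq> S)}"

text \<open>Geometric realization of an abstract simplicial complex K (a set of nonempty finite faces):
  the set of finitely supported convex weight functions whose support is a face,
  with the subspace topology of the product topology on 'a \<Rightarrow> real.\<close>

definition geometric_realization :: "'a set set \<Rightarrow> ('a \<Rightarrow> real) topology" where
  "geometric_realization K = subtopology (powertop_real UNIV)
     {f. (\<forall>x. 0 \<le> f x) \<and> finite {x. f x \<noteq> 0} \<and> {x. f x \<noteq> 0} \<in> K \<and> sum f {x. f x \<noteq> 0} = 1}"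

definition quotient_topology :: "'a topology \<Rightarrow> ('a \<Rightarrow> 'b) \<Rightarrow> 'b topology" where
  "quotient_topology X q = topology (\<lambda>U. U \<subseteq> q ` topspace X \<and> openin X {x \<in> topspace X. q x \<in> U})"

datatype 'a susp_pt = North | South | Mid 'a real

definition suspension :: "'a topology \<Rightarrow> 'a susp_pt topology" where
  "suspension X = quotient_topology (prod_topology X (subtopology euclideanreal {-1..1}))
     (\<lambda>(x, t). if t = 1 then North else if t = -1 then South else Mid x t)"

datatype vert = U nat nat | V1 | V2 | W1 | W2

definition H_verts :: "nat \<Rightarrow> nat \<Rightarrow> vert set" where
  "H_verts k n = {U i j | i j. 1 \<le> i \<and> i \<le> k \<and> 1 \<le> j \<and> j \<le> n} \<union> {V1, V2}"

definition H_edges :: "nat \<Rightarrow> nat \<Rightarrow> vert set set" where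
  "H_edges k n =
     {{U i a, U (i + 1) b} | i a b. 1 \<le> i \<and> i + 1 \<le> k \<and> 1 \<le> a \<and> a \<le> n \<and> 1 \<le> b \<and> b \<le> n \<and> a \<noteq> b}
   \<union> {{U 1 i, V1} | i. 2 \<le> i \<and> i \<le> n}
   \<union> {{U k i, V2} | i. 1 \<le> i \<and> i \<le> n \<and> i \<noteq> 2}"

definition Hr_verts :: "nat \<Rightarrow> nat \<Rightarrow> vert set" where
  "Hr_verts k n = H_verts k n \<union> {W1, W2}"

definition Hr_edges :: "nat \<Rightarrow> nat \<Rightarrow> vert set set" where
  "Hr_edges k n = H_edges k n \<union> {{V1, W1}, {V2, W2}}"

end

theory Submission
  imports Defs
begin


abbreviation GRc :: "'a set set \<Rightarrow> ('a \<Rightarrow> real) set" where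
  "GRc K \<equiv> {f. (\<forall>x. 0 \<le> f x) \<and> finite {x. f x \<noteq> 0} \<and> {x. f x \<noteq> 0} \<in> K \<and> sum f {x. f x \<noteq> 0} = 1}"

lemma topspace_GR: "topspace (geometric_realization K) = GRc K"
  by (simp add: geometric_realization_def)

definition indep :: "'a set \<Rightarrow> 'a set set \<Rightarrow> ('a \<Rightarrow> real) \<Rightarrow> bool" where
  "indep V E f \<longleftrightarrow> (\<forall>x. 0 \<le> f x) \<and> (\<forall>x. x \<notin> V \<longrightarrow> f x = 0) \<and> sum f V = 1 \<and> (\<forall>e\<in>E. \<not> e \<subseteq> {x. f x \<noteq> 0})"

lemma mem_GR:
  assumes "finite V"
  shows "f \<in> topspace (geometric_realization (independence_complex V E)) \<longleftrightarrow> indep V E f"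
proof
  assume f: "f \<in> topspace (geometric_realization (independence_complex V E))"
  then have s: "{x. f x \<noteq> 0} \<subseteq> V" and fin: "finite {x. f x \<noteq> 0}"
    by (auto simp: topspace_GR independence_complex_def)
  have "sum f V = sum f {x. f x \<noteq> 0}"
    by (rule sum.mono_neutral_right[OF assms s]) auto
  then show "indep V E f" using f s
    by (auto simp: topspace_GR independence_complex_def indep_def)
next
  assume f: "indep V E f"
  then have s: "{x. f x \<noteq> 0} \<subseteq> V" by (auto simp: indep_def)
  have fin: "finite {x. f x \<noteq> 0}" using s assms finite_subset by blast
  have eq: "sum f V = sum f {x. f x \<noteq> 0}"
    by (rule sum.mono_neutral_right[OF assms s]) auto
  have ne: "{x. f x \<noteq> 0} \<noteq> {}"
  proof
    assume "{x. f x \<noteq> 0} = {}"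
    then have "sum f {x. f x \<noteq> 0} = 0" by simp
    with eq f show False by (simp add: indep_def)
  qed
  show "f \<in> topspace (geometric_realization (independence_complex V E))"
    using f s fin eq ne by (auto simp: topspace_GR independence_complex_def indep_def)
qed

lemma cont_into_GR:
  "continuous_map X (geometric_realization K) h \<longleftrightarrow>
     (\<forall>y. continuous_map X euclideanreal (\<lambda>x. h x y)) \<and> h \<in> topspace X \<rightarrow> topspace (geometric_realization K)"
  unfolding geometric_realization_def continuous_map_in_subtopology continuous_map_componentwise_UNIV
  by simp

lemma cont_from_GR [continuous_intros]:
  "continuous_map (geometric_realization K) euclideanreal (\<lambda>f. f y)"
  unfolding geometric_realization_def
  by (intro continuous_map_from_subtopology continuous_map_product_projection) auto

lemma GR_inclusion:
  assumes "topspace (geometric_realization K) \<subseteq> topspace (geometric_realization L)"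
  shows "continuous_map (geometric_realization K) (geometric_realization L) id"
  using assms unfolding cont_into_GR by (auto intro: cont_from_GR)

lemma istopology_quot: "istopology (\<lambda>W. W \<subseteq> q ` topspace X \<and> openin X {x \<in> topspace X. q x \<in> W})"
proof -
  have A: "S \<inter> T \<subseteq> q ` topspace X \<and> openin X {x \<in> topspace X. q x \<in> S \<inter> T}"
    if "S \<subseteq> q ` topspace X \<and> openin X {x \<in> topspace X. q x \<in> S}"
       "T \<subseteq> q ` topspace X \<and> openin X {x \<in> topspace X. q x \<in> T}" for S T
  proof -
    have "openin X ({x \<in> topspace X. q x \<in> S} \<inter> {x \<in> topspace X. q x \<in> T})"
      using that by (intro openin_Int) auto
    moreover have "{x \<in> topspace X. q x \<in> S} \<inter> {x \<in> topspace X. q x \<in> T} = {x \<in> topspace X. q x \<in> S \<inter> T}" by auto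
    ultimately show ?thesis using that by auto
  qed
  have B: "\<Union>KK \<subseteq> q ` topspace X \<and> openin X {x \<in> topspace X. q x \<in> \<Union>KK}"
    if "\<forall>S\<in>KK. S \<subseteq> q ` topspace X \<and> openin X {x \<in> topspace X. q x \<in> S}" for KK
  proof -
    have "openin X (\<Union>S\<in>KK. {x \<in> topspace X. q x \<in> S})" using that by auto
    moreover have "(\<Union>S\<in>KK. {x \<in> topspace X. q x \<in> S}) = {x \<in> topspace X. q x \<in> \<Union>KK}" by auto
    ultimately show ?thesis using that by auto
  qed
  show ?thesis unfolding istopology_def using A B by blast
qed

lemma openin_quot:
  "openin (quotient_topology X q) W \<longleftrightarrow> W \<subseteq> q ` topspace X \<and> openin X {x \<in> topspace X. q x \<in> W}"
  unfolding quotient_topology_def using istopology_quot[of q X] by (simp add: topology_inverse')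

lemma topspace_quot: "topspace (quotient_topology X q) = q ` topspace X"
proof -
  have "openin (quotient_topology X q) (q ` topspace X)"
  proof -
    have "{x \<in> topspace X. q x \<in> q ` topspace X} = topspace X" by auto
    then show ?thesis unfolding openin_quot by auto
  qed
  then have "q ` topspace X \<subseteq> topspace (quotient_topology X q)" by (rule openin_subset)
  moreover have "topspace (quotient_topology X q) \<subseteq> q ` topspace X"
    using openin_quot[of X q "topspace (quotient_topology X q)"] by auto
  ultimately show ?thesis by blast
qed

lemma cont_quot_map: "continuous_map X (quotient_topology X q) q"
  unfolding continuous_map_def topspace_quot by (auto simp: openin_quot)

lemma cont_from_quot:
  assumes "continuous_map X Y (\<lambda>x. g (q x))"
  shows "continuous_map (quotient_topology X q) Y g"
  unfolding continuous_map_def topspace_quot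
proof (intro conjI allI impI)
  show "g \<in> q ` topspace X \<rightarrow> topspace Y" using assms by (auto simp: continuous_map_def)
  fix W assume "openin Y W"
  then have "openin X {x \<in> topspace X. g (q x) \<in> W}" using assms by (auto simp: continuous_map_def)
  then show "openin (quotient_topology X q) {x \<in> q ` topspace X. g x \<in> W}"
    unfolding openin_quot by (auto elim!: back_subst[where P="openin X"])
qed


definition retr :: "'a set \<Rightarrow> ('a \<Rightarrow> 'a) \<Rightarrow> ('a \<Rightarrow> real) \<Rightarrow> ('a \<Rightarrow> real)" where
  "retr R p f = (\<lambda>y. if y \<in> R then 0 else f y + sum f {x\<in>R. p x = y})"

lemma fold_homotopy_mem:
  assumes V: "finite V" and RV: "R \<subseteq> V" and pR: "p ` R \<subseteq> V - R"
    and dbl: "\<forall>e\<in>E. \<exists>a b. a \<noteq> b \<and> e = {a, b}"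
    and nb: "\<forall>x\<in>R. \<forall>y\<in>V. {p x, y} \<in> E \<longrightarrow> {x, y} \<in> E"
    and pp: "\<forall>x\<in>R. \<forall>x'\<in>R. {p x, p x'} \<notin> E"
    and f: "indep V E f" and t: "0 \<le> t" "t \<le> (1::real)"
  shows "indep V E (\<lambda>y. t * f y + (1 - t) * retr R p f y)"
proof -
  have R: "finite R" using V RV finite_subset by blast
  have f0: "\<And>x. 0 \<le> f x" and fV: "\<And>x. x \<notin> V \<Longrightarrow> f x = 0" and fs: "sum f V = 1"
    and fE: "\<And>e. e \<in> E \<Longrightarrow> \<not> e \<subseteq> {x. f x \<noteq> 0}" using f by (auto simp: indep_def)
  have r0: "0 \<le> retr R p f y" for y
    unfolding retr_def using f0 by (auto intro!: add_nonneg_nonneg sum_nonneg)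
  have rV: "retr R p f y = 0" if "y \<notin> V" for y
  proof -
    have e: "{x\<in>R. p x = y} = {}" using pR that by auto
    have "y \<notin> R" using that RV by auto
    then show ?thesis unfolding retr_def e using that fV by simp
  qed
  have rs: "sum (retr R p f) V = 1"
  proof -
    have "sum (retr R p f) V = sum (retr R p f) (V - R) + sum (retr R p f) R"
      using V RV by (metis Diff_partition add.commute finite_Un sum.union_disjoint Diff_disjoint
          Int_commute Un_Diff_cancel2 infinite_Un sup.absorb_iff1)
    also have "sum (retr R p f) R = 0" by (simp add: retr_def)
    also have "sum (retr R p f) (V - R) = sum f (V - R) + sum (\<lambda>y. sum f {x\<in>R. p x = y}) (V - R)"
      by (simp add: retr_def sum.distrib)
    also have "sum (\<lambda>y. sum f {x\<in>R. p x = y}) (V - R) = sum f R"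
      by (rule sum.group[OF R _ pR]) (use V in auto)
    also have "sum f (V - R) + sum f R = sum f V"
      using V RV by (metis sum.subset_diff)
    finally show ?thesis using fs by simp
  qed
  define h where "h = (\<lambda>y. t * f y + (1 - t) * retr R p f y)"
  have h0: "0 \<le> h y" for y unfolding h_def using t f0 r0 by simp
  have hV: "h y = 0" if "y \<notin> V" for y unfolding h_def using fV rV that by simp
  have hs: "sum h V = 1" unfolding h_def using fs rs by (simp add: sum.distrib sum_distrib_left[symmetric])
  have supp: "f y \<noteq> 0 \<or> (\<exists>x\<in>R. p x = y \<and> f x \<noteq> 0)" if "h y \<noteq> 0" for y
  proof (rule ccontr)
    assume "\<not> ?thesis"
    then have "f y = 0" "\<forall>x\<in>R. p x = y \<longrightarrow> f x = 0" by auto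
    then have "retr R p f y = 0" unfolding retr_def by auto
    with \<open>f y = 0\<close> that show False by (simp add: h_def)
  qed
  have fVin: "y \<in> V" if "f y \<noteq> 0" for y using fV that by blast
  have hE: "\<not> e \<subseteq> {x. h x \<noteq> 0}" if e: "e \<in> E" for e
  proof
    assume sub: "e \<subseteq> {x. h x \<noteq> 0}"
    obtain a b where ab: "a \<noteq> b" "e = {a, b}" using dbl e by blast
    have ha: "h a \<noteq> 0" and hb: "h b \<noteq> 0" using sub ab by auto
    have C: False if "f u \<noteq> 0" "x \<in> R" "f x \<noteq> 0" "{p x, u} \<in> E" for u x
    proof -
      have "{x, u} \<in> E" using nb that fVin by blast
      then show False using fE[of "{x,u}"] that by auto
    qed
    from supp[OF ha] supp[OF hb] show False
    proof (elim disjE bexE conjE)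
      assume "f a \<noteq> 0" "f b \<noteq> 0" then show False using fE[OF e] ab by auto
    next
      fix x assume "f a \<noteq> 0" "x \<in> R" "p x = b" "f x \<noteq> 0"
      then show False using C[of a x] e ab by (auto simp: insert_commute)
    next
      fix x assume "f b \<noteq> 0" "x \<in> R" "p x = a" "f x \<noteq> 0"
      then show False using C[of b x] e ab by auto
    next
      fix x x' assume "x \<in> R" "p x = a" "x' \<in> R" "p x' = b"
      then show False using pp e ab by auto
    qed
  qed
  show ?thesis using h0 hV hs hE unfolding indep_def h_def[symmetric] by blast
qed

lemma fold_lemma:
  assumes V: "finite V" and RV: "R \<subseteq> V" and pR: "p ` R \<subseteq> V - R"
    and dbl: "\<forall>e\<in>E. \<exists>a b. a \<noteq> b \<and> e = {a, b}"
    and nb: "\<forall>x\<in>R. \<forall>y\<in>V. {p x, y} \<in> E \<longrightarrow> {x, y} \<in> E"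
    and pp: "\<forall>x\<in>R. \<forall>x'\<in>R. {p x, p x'} \<notin> E"
  shows "geometric_realization (independence_complex V E) homotopy_equivalent_space
         geometric_realization (independence_complex (V - R) E)"
proof -
  let ?X = "geometric_realization (independence_complex V E)"
  let ?Y = "geometric_realization (independence_complex (V - R) E)"
  have R: "finite R" using V RV finite_subset by blast
  have V': "finite (V - R)" using V by simp
  have memX: "f \<in> topspace ?X \<longleftrightarrow> indep V E f" for f by (rule mem_GR[OF V])
  have memY: "f \<in> topspace ?Y \<longleftrightarrow> indep (V - R) E f" for f by (rule mem_GR[OF V'])
  have YX: "indep V E f" if "indep (V - R) E f" for f
  proof -
    have "sum f V = sum f (V - R)"
      using that V by (intro sum.mono_neutral_right) (auto simp: indep_def)
    then show ?thesis using that by (auto simp: indep_def)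
  qed
  have retrY: "indep (V - R) E (retr R p f)" if "indep V E f" for f
  proof -
    have i: "indep V E (retr R p f)"
      using fold_homotopy_mem[OF V RV pR dbl nb pp that, of 0] by simp
    have "sum (retr R p f) (V - R) = sum (retr R p f) V"
      using V by (intro sum.mono_neutral_left) (auto simp: retr_def)
    then show ?thesis using i by (auto simp: indep_def retr_def)
  qed
  have retr_id: "retr R p f = f" if "indep (V - R) E f" for f
  proof -
    have "f x = 0" if "x \<in> R" for x using \<open>indep (V - R) E f\<close> that by (auto simp: indep_def)
    then show ?thesis by (auto simp: retr_def fun_eq_iff)
  qed
  have cont_retr: "continuous_map Z euclideanreal (\<lambda>z. retr R p (g z) y)"
    if "\<And>y. continuous_map Z euclideanreal (\<lambda>z. g z y)" for Z g y
  proof (cases "y \<in> R")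
    case True then show ?thesis by (simp add: retr_def)
  next
    case False
    have "finite {x\<in>R. p x = y}" using R by simp
    then show ?thesis using False that by (simp add: retr_def) (intro continuous_intros; simp)
  qed
  have cr: "continuous_map ?X ?Y (retr R p)"
    unfolding cont_into_GR
    by (auto simp: memX memY retrY intro!: cont_retr cont_from_GR)
  have ci: "continuous_map ?Y ?X id"
    by (rule GR_inclusion) (auto simp: memX memY YX)
  have rm: "retraction_maps ?X ?Y (retr R p) id"
    unfolding retraction_maps_def using cr ci by (auto simp: memY retr_id)
  have hom: "homotopic_with (\<lambda>x. True) ?X ?X (retr R p) id"
    unfolding homotopic_with_def
  proof (intro exI conjI allI ballI)
    let ?h = "\<lambda>(t::real, f). (\<lambda>y. t * f y + (1 - t) * retr R p f y)"
    show "continuous_map (prod_topology (top_of_set {0..1}) ?X) ?X ?h"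
      unfolding cont_into_GR
    proof (intro conjI allI)
      fix y
      have "continuous_map (prod_topology (top_of_set {0..1}) ?X) euclideanreal
              (\<lambda>z. fst z * snd z y + (1 - fst z) * retr R p (snd z) y)"
      proof -
        have s: "continuous_map (prod_topology (top_of_set {0..1}) ?X) euclideanreal (\<lambda>z. snd z y)" for y
          using continuous_map_compose[OF continuous_map_snd cont_from_GR] by (simp add: o_def)
        have f: "continuous_map (prod_topology (top_of_set {0..1::real}) ?X) euclideanreal fst"
          using continuous_map_compose[OF continuous_map_fst continuous_map_from_subtopology[OF continuous_map_id]]
          by (simp add: o_def)
        show ?thesis by (intro continuous_intros cont_retr s f)
      qed
      then show "continuous_map (prod_topology (top_of_set {0..1}) ?X) euclideanreal (\<lambda>x. ?h x y)"
        by (simp add: case_prod_unfold)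
    next
      show "?h \<in> topspace (prod_topology (top_of_set {0..1}) ?X) \<rightarrow> topspace ?X"
        using fold_homotopy_mem[OF V RV pR dbl nb pp] by (auto simp: memX)
    qed
    show "?h (0, f) = retr R p f" for f by simp
    show "?h (1, f) = id f" for f by simp
  qed simp
  show ?thesis by (rule deformation_retract_imp_homotopy_equivalent_space[OF hom rm])
qed


lemma topspace_nsphere': "y \<in> topspace (nsphere m) \<longleftrightarrow> (\<Sum>i\<le>m. y i ^ 2) = 1 \<and> (\<forall>i>m. y i = 0)"
  by (simp add: nsphere)

lemma cross_lemma:
  fixes a b :: "nat \<Rightarrow> 'a"
  assumes ia: "inj_on a {..m}" and ib: "inj_on b {..m}" and ab: "\<forall>i\<le>m. \<forall>j\<le>m. a i \<noteq> b j"
    and Vdef: "V = a ` {..m} \<union> b ` {..m}"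
    and Eeq: "\<forall>x\<in>V. \<forall>y\<in>V. {x, y} \<in> E \<longleftrightarrow> (\<exists>i\<le>m. {x, y} = {a i, b i})"
    and dbl: "\<forall>e\<in>E. \<exists>u v. u \<noteq> v \<and> e = {u, v}"
  shows "geometric_realization (independence_complex V E) homeomorphic_space nsphere m"
proof -
  let ?X = "geometric_realization (independence_complex V E)"
  have V: "finite V" using Vdef by simp
  have memX: "f \<in> topspace ?X \<longleftrightarrow> indep V E f" for f by (rule mem_GR[OF V])
  define d where "d f i = f (a i) - f (b i)" for f :: "'a \<Rightarrow> real" and i
  define L2 where "L2 f = sqrt (\<Sum>i\<le>m. (d f i)^2)" for f
  define phi where "phi f = (\<lambda>i. if i \<le> m then d f i / L2 f else 0)" for f
  define L1 where "L1 y = (\<Sum>i\<le>m. \<bar>y i\<bar>)" for y :: "nat \<Rightarrow> real"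
  define psi where "psi y = (\<lambda>v. (\<Sum>i\<le>m. (if v = a i then max (y i) 0 else 0) + (if v = b i then max (- y i) 0 else 0)) / L1 y)" for y
  have disj: "a ` {..m} \<inter> b ` {..m} = {}" using ab by auto
  have sumV: "sum g V = (\<Sum>i\<le>m. g (a i)) + (\<Sum>i\<le>m. g (b i))" for g :: "'a \<Rightarrow> real"
  proof -
    have "sum g V = sum g (a ` {..m}) + sum g (b ` {..m})"
      unfolding Vdef by (rule sum.union_disjoint) (use disj in auto)
    also have "sum g (a ` {..m}) = (\<Sum>i\<le>m. g (a i))" using sum.reindex[OF ia] by simp
    also have "sum g (b ` {..m}) = (\<Sum>i\<le>m. g (b i))" using sum.reindex[OF ib] by simp
    finally show ?thesis .
  qed
  have abV: "a i \<in> V" "b i \<in> V" if "i \<le> m" for i using that Vdef by auto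
  have F1: "f (a i) = 0 \<or> f (b i) = 0" if f: "indep V E f" and i: "i \<le> m" for f i
  proof -
    have "{a i, b i} \<in> E" using Eeq abV[OF i] i by blast
    then show ?thesis using f by (auto simp: indep_def)
  qed
  have Fabs: "\<bar>d f i\<bar> = f (a i) + f (b i)" if f: "indep V E f" and i: "i \<le> m" for f i
    using F1[OF f i] f unfolding d_def indep_def by (metis abs_of_nonneg abs_minus_commute add_0 diff_zero add.right_neutral)
  have F2: "(\<Sum>i\<le>m. \<bar>d f i\<bar>) = 1" if f: "indep V E f" for f
  proof -
    have "(\<Sum>i\<le>m. \<bar>d f i\<bar>) = (\<Sum>i\<le>m. f (a i) + f (b i))" using Fabs[OF f] by simp
    also have "\<dots> = sum f V" by (simp add: sumV sum.distrib)
    finally show ?thesis using f by (simp add: indep_def)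
  qed
  have F3: "L2 f > 0" if f: "indep V E f" for f
  proof (rule ccontr)
    assume "\<not> L2 f > 0"
    then have "(\<Sum>i\<le>m. (d f i)^2) = 0" unfolding L2_def
      by (metis real_sqrt_gt_0_iff sum_nonneg zero_le_power2 order_neq_le_trans)
    then have "\<forall>i\<in>{..m}. (d f i)^2 = 0" by (subst (asm) sum_nonneg_eq_0_iff) auto
    then have "(\<Sum>i\<le>m. \<bar>d f i\<bar>) = 0" by simp
    with F2[OF f] show False by simp
  qed
  have L2sq: "(L2 f)^2 = (\<Sum>i\<le>m. (d f i)^2)" for f
    unfolding L2_def by (simp add: sum_nonneg)
  have phi_mem: "phi f \<in> topspace (nsphere m)" if f: "indep V E f" for f
  proof -
    have "(\<Sum>i\<le>m. (phi f i)^2) = (\<Sum>i\<le>m. (d f i)^2) / (L2 f)^2"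
      by (simp add: phi_def power_divide sum_divide_distrib)
    also have "\<dots> = 1"
    proof -
      have "(L2 f)^2 > 0" using F3[OF f] by simp
      then show ?thesis using L2sq[of f] by simp
    qed
    finally show ?thesis unfolding topspace_nsphere' by (simp add: phi_def)
  qed
  have S1: "L1 y > 0" if y: "y \<in> topspace (nsphere m)" for y
  proof (rule ccontr)
    assume "\<not> L1 y > 0"
    then have "L1 y = 0" unfolding L1_def by (metis sum_nonneg abs_ge_zero order_neq_le_trans)
    then have "\<forall>i\<in>{..m}. \<bar>y i\<bar> = 0" unfolding L1_def by (subst (asm) sum_nonneg_eq_0_iff) auto
    then have "(\<Sum>i\<le>m. y i ^ 2) = 0" by simp
    with y show False by (simp add: topspace_nsphere')
  qed
  have psi_a: "psi y (a j) = max (y j) 0 / L1 y" if j: "j \<le> m" for y j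
  proof -
    have "(\<Sum>i\<le>m. (if a j = a i then max (y i) 0 else 0) + (if a j = b i then max (- y i) 0 else 0))
        = (\<Sum>i\<le>m. if i = j then max (y j) 0 else 0)"
      using ab j inj_onD[OF ia] by (intro sum.cong) auto
    then show ?thesis using j by (simp add: psi_def)
  qed
  have psi_b: "psi y (b j) = max (- y j) 0 / L1 y" if j: "j \<le> m" for y j
  proof -
    have "(\<Sum>i\<le>m. (if b j = a i then max (y i) 0 else 0) + (if b j = b i then max (- y i) 0 else 0))
        = (\<Sum>i\<le>m. if i = j then max (- y j) 0 else 0)"
      using ab j inj_onD[OF ib] by (intro sum.cong) (auto, metis+)
    then show ?thesis using j by (simp add: psi_def)
  qed
  have psi_out: "psi y v = 0" if "v \<notin> V" for y v
  proof -
    have "\<And>i. i \<le> m \<Longrightarrow> v \<noteq> a i \<and> v \<noteq> b i" using that Vdef by auto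
    then show ?thesis by (simp add: psi_def)
  qed
  have psi_mem: "indep V E (psi y)" if y: "y \<in> topspace (nsphere m)" for y
  proof -
    have L: "L1 y > 0" by (rule S1[OF y])
    have nn: "0 \<le> psi y v" for v
      unfolding psi_def using L by (intro divide_nonneg_pos sum_nonneg add_nonneg_nonneg) auto
    have "sum (psi y) V = (\<Sum>i\<le>m. max (y i) 0 + max (- y i) 0) / L1 y"
      by (simp add: sumV psi_a psi_b sum_divide_distrib[symmetric] sum.distrib add_divide_distrib)
    also have "(\<Sum>i\<le>m. max (y i) 0 + max (- y i) 0) = L1 y"
      unfolding L1_def by (intro sum.cong) auto
    finally have s: "sum (psi y) V = 1" using L by simp
    have e: "\<not> e \<subseteq> {v. psi y v \<noteq> 0}" if e: "e \<in> E" for e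
    proof
      assume sub: "e \<subseteq> {v. psi y v \<noteq> 0}"
      obtain u w where uw: "u \<noteq> w" "e = {u, w}" using dbl e by blast
      have "u \<in> V" "w \<in> V" using sub uw psi_out by auto
      then obtain i where i: "i \<le> m" "{u, w} = {a i, b i}" using Eeq e uw by blast
      have "psi y (a i) \<noteq> 0" "psi y (b i) \<noteq> 0" using sub uw i by (auto simp: doubleton_eq_iff)
      then show False using psi_a[OF i(1)] psi_b[OF i(1)] by (auto simp: max_def split: if_splits)
    qed
    show ?thesis using nn psi_out s e by (auto simp: indep_def)
  qed
  have psi_phi: "psi (phi f) = f" if f: "indep V E f" for f
  proof
    fix v
    have L2: "L2 f > 0" by (rule F3[OF f])
    have L1: "L1 (phi f) = 1 / L2 f"
    proof -
      have "L1 (phi f) = (\<Sum>i\<le>m. \<bar>d f i\<bar> / L2 f)" unfolding L1_def phi_def using L2 by (intro sum.cong) auto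
      also have "\<dots> = 1 / L2 f" using F2[OF f] by (simp add: sum_divide_distrib[symmetric])
      finally show ?thesis .
    qed
    have f0: "\<And>x. 0 \<le> f x" using f by (simp add: indep_def)
    show "psi (phi f) v = f v"
    proof (cases "v \<in> V")
      case False then show ?thesis using psi_out f by (auto simp: indep_def)
    next
      case True
      then consider j where "j \<le> m" "v = a j" | j where "j \<le> m" "v = b j" using Vdef by auto
      then show ?thesis
      proof cases
        case 1
        have "max (d f j / L2 f) 0 / (1 / L2 f) = max (d f j) 0" using L2
          by (auto simp: max_def field_simps)
        also have "\<dots> = f (a j)" using F1[OF f 1(1)] f0[of "a j"] f0[of "b j"] by (auto simp: d_def max_def)
        finally show ?thesis using 1 psi_a L1 by (simp add: phi_def)
      next
        case 2
        have "max (- (d f j / L2 f)) 0 / (1 / L2 f) = max (- d f j) 0" using L2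
          by (auto simp: max_def field_simps)
        also have "\<dots> = f (b j)" using F1[OF f 2(1)] f0[of "a j"] f0[of "b j"] by (auto simp: d_def max_def)
        finally show ?thesis using 2 psi_b L1 by (simp add: phi_def)
      qed
    qed
  qed
  have phi_psi: "phi (psi y) = y" if y: "y \<in> topspace (nsphere m)" for y
  proof
    fix i
    have L: "L1 y > 0" by (rule S1[OF y])
    have d: "d (psi y) j = y j / L1 y" if "j \<le> m" for j
      using that by (simp add: d_def psi_a psi_b diff_divide_distrib[symmetric] max_def)
    have "L2 (psi y) = sqrt ((\<Sum>j\<le>m. y j ^ 2) / (L1 y)^2)"
      unfolding L2_def by (simp add: d power_divide sum_divide_distrib)
    also have "\<dots> = 1 / L1 y" using y L by (simp add: topspace_nsphere' real_sqrt_divide)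
    finally have L2: "L2 (psi y) = 1 / L1 y" .
    show "phi (psi y) i = y i"
      using y L by (auto simp: phi_def d L2 topspace_nsphere')
  qed
  have contphi: "continuous_map ?X (nsphere m) phi"
    unfolding nsphere continuous_map_in_subtopology continuous_map_componentwise_UNIV
  proof (intro conjI allI)
    fix i
    show "continuous_map ?X euclideanreal (\<lambda>x. phi x i)"
    proof (cases "i \<le> m")
      case True
      have nz: "sqrt (\<Sum>i\<le>m. (f (a i) - f (b i))^2) \<noteq> 0" if "f \<in> topspace ?X" for f
      proof -
        have "L2 f > 0" using F3 memX that by blast
        then show ?thesis by (simp add: L2_def d_def)
      qed
      have "continuous_map ?X euclideanreal (\<lambda>f. d f i / L2 f)"
        unfolding d_def L2_def
        by (intro continuous_intros cont_from_GR nz finite_atMost)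
      then show ?thesis using True by (simp add: phi_def)
    qed (simp add: phi_def)
    show "phi \<in> topspace ?X \<rightarrow> {x. (\<Sum>i\<le>m. (x i)\<^sup>2) = 1 \<and> (\<forall>i>m. x i = 0)}"
      using phi_mem by (auto simp: memX topspace_nsphere')
  qed
  have contpsi: "continuous_map (nsphere m) ?X psi"
    unfolding cont_into_GR
  proof (intro conjI allI)
    fix v
    show "continuous_map (nsphere m) euclideanreal (\<lambda>y. psi y v)"
    proof -
      have nz: "(\<Sum>i\<le>m. \<bar>y i\<bar>) \<noteq> 0" if "y \<in> topspace (nsphere m)" for y
      proof -
        have "L1 y > 0" using S1 that by blast
        then show ?thesis by (simp add: L1_def)
      qed
      show ?thesis unfolding psi_def L1_def
        by (intro continuous_intros continuous_map_nsphere_projection nz finite_atMost)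
    qed
    show "psi \<in> topspace (nsphere m) \<rightarrow> topspace ?X" using psi_mem by (auto simp: memX)
  qed
  have "homeomorphic_maps ?X (nsphere m) phi psi"
    unfolding homeomorphic_maps_def using contphi contpsi psi_phi phi_psi by (auto simp: memX)
  then show ?thesis by (rule homeomorphic_maps_imp_homeomorphic_space)
qed


lemma Hausdorff_GR: "Hausdorff_space (geometric_realization K)"
  unfolding geometric_realization_def
  by (intro Hausdorff_space_subtopology) (simp add: Hausdorff_space_product_topology)

lemma closed_proj_pre:
  assumes "closed C" and g: "continuous_map (powertop_real UNIV) euclideanreal g"
  shows "closedin (powertop_real UNIV) {f. g f \<in> C}"
  using closedin_continuous_map_preimage[OF g closed_closedin[THEN iffD1, OF assms(1)]] by simp

lemma "compactin (powertop_real UNIV) (PiE UNIV S) \<Longrightarrow> closedin (powertop_real UNIV) (PiE UNIV S)"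
  by (simp add: compactin_imp_closedin Hausdorff_space_product_topology)


lemma proj_cont: "continuous_map (powertop_real UNIV) euclideanreal (\<lambda>f. f x)"
  by (rule continuous_map_product_projection) simp

lemma c2: "closedin (powertop_real UNIV) {f. f x \<in> {0..}}" by (rule closed_proj_pre[OF _ proj_cont]) simp

lemma c3: "finite V \<Longrightarrow> closedin (powertop_real UNIV) {f. sum f V \<in> {1}}"
      by (rule closed_proj_pre) (auto intro!: continuous_intros proj_cont)

lemma c4: "closedin (powertop_real UNIV) {f. f u * f w \<in> {0::real}}"
      by (rule closed_proj_pre) (auto intro!: continuous_intros proj_cont)
lemma compact_GR:
  assumes V: "finite V" and dbl: "\<forall>e\<in>E. \<exists>a b. a \<noteq> b \<and> e = {a, b}"
  shows "compact_space (geometric_realization (independence_complex V E))"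
proof -
  let ?P = "powertop_real (UNIV :: 'a set)"
  define S where "S = (\<lambda>x::'a. if x \<in> V then {0..1::real} else {0})"
  define KK where "KK = {PiE UNIV S} \<union> range (\<lambda>x. {f. f x \<in> {0..}}) \<union> {{f. sum f V \<in> {1}}}
        \<union> {{f. f u * f w \<in> {0}} | u w. {u, w} \<in> E}"
  have cK: "compactin ?P (PiE UNIV S)"
    unfolding compactin_PiE S_def by auto
  have proj: "continuous_map ?P euclideanreal (\<lambda>f. f x)" for x
    by (rule continuous_map_product_projection) simp
  have closed: "closedin ?P K" if "K \<in> KK" for K
  proof -
    have c1: "closedin ?P (PiE UNIV S)" using cK by (simp add: compactin_imp_closedin Hausdorff_space_product_topology)
    from that consider "K = PiE UNIV S" | x where "K = {f. f x \<in> {0..}}" | "K = {f. sum f V \<in> {1}}"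
      | u w where "K = {f. f u * f w \<in> {0}}"
      unfolding KK_def by blast
    then show ?thesis proof cases qed (use c1 c2 c3[OF V] c4 in auto)
  qed
  have eq: "\<Inter>KK = topspace (geometric_realization (independence_complex V E))"
  proof (rule set_eqI)
    fix f :: "'a \<Rightarrow> real"
    have "f \<in> \<Inter>KK \<longleftrightarrow> f \<in> PiE UNIV S \<and> (\<forall>x. 0 \<le> f x) \<and> sum f V = 1 \<and> (\<forall>u w. {u,w} \<in> E \<longrightarrow> f u * f w = 0)"
    proof
      assume f: "f \<in> \<Inter>KK"
      have m: "f \<in> K" if "K \<in> KK" for K using f that by blast
      have "f \<in> PiE UNIV S" by (rule m) (simp add: KK_def)
      moreover have "f x \<in> {0..}" for x using m[of "{f. f x \<in> {0..}}"] by (simp add: KK_def)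
      moreover have "sum f V \<in> {1}" using m[of "{f. sum f V \<in> {1}}"] by (simp add: KK_def)
      moreover have "f u * f w \<in> {0}" if "{u,w} \<in> E" for u w
        using m[of "{f. f u * f w \<in> {0}}"] that unfolding KK_def by blast
      ultimately show "f \<in> PiE UNIV S \<and> (\<forall>x. 0 \<le> f x) \<and> sum f V = 1 \<and> (\<forall>u w. {u,w} \<in> E \<longrightarrow> f u * f w = 0)"
        by simp
    next
      assume h: "f \<in> PiE UNIV S \<and> (\<forall>x. 0 \<le> f x) \<and> sum f V = 1 \<and> (\<forall>u w. {u,w} \<in> E \<longrightarrow> f u * f w = 0)"
      show "f \<in> \<Inter>KK"
      proof
        fix K assume "K \<in> KK"
        then consider "K = PiE UNIV S" | x where "K = {f. f x \<in> {0..}}" | "K = {f. sum f V \<in> {1}}"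
          | u w where "K = {f. f u * f w \<in> {0}}" "{u,w} \<in> E"
          unfolding KK_def by blast
        then show "f \<in> K" proof cases qed (use h in auto)
      qed
    qed
    also have "\<dots> \<longleftrightarrow> indep V E f"
    proof
      assume h: "f \<in> PiE UNIV S \<and> (\<forall>x. 0 \<le> f x) \<and> sum f V = 1 \<and> (\<forall>u w. {u,w} \<in> E \<longrightarrow> f u * f w = 0)"
      have "\<forall>x. x \<notin> V \<longrightarrow> f x = 0"
      proof (intro allI impI)
        fix x assume "x \<notin> V"
        have "f x \<in> S x" using h by (intro PiE_mem[of f UNIV S]) auto
        then show "f x = 0" using \<open>x \<notin> V\<close> by (simp add: S_def)
      qed
      moreover have "\<forall>e\<in>E. \<not> e \<subseteq> {x. f x \<noteq> 0}"
      proof (intro ballI notI)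
        fix e assume e: "e \<in> E" and sub: "e \<subseteq> {x. f x \<noteq> 0}"
        have "\<exists>a b. a \<noteq> b \<and> e = {a, b}" using dbl e by (rule bspec)
        then obtain u w where uw: "e = {u,w}" by blast
        have "f u * f w = 0" using h e uw by simp
        moreover have "f u \<noteq> 0" "f w \<noteq> 0" using sub uw by auto
        ultimately show False by simp
      qed
      ultimately show "indep V E f" using h by (simp add: indep_def)
    next
      assume f: "indep V E f"
      have le1: "f x \<le> 1" if "x \<in> V" for x
      proof -
        have "f x \<le> sum f V" using f V that by (intro member_le_sum) (auto simp: indep_def)
        then show ?thesis using f by (simp add: indep_def)
      qed
      have "f \<in> PiE UNIV S" using f le1 by (auto simp: S_def PiE_UNIV_domain indep_def)
      moreover have "\<forall>u w. {u,w} \<in> E \<longrightarrow> f u * f w = 0"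
      proof (intro allI impI)
        fix u w assume "{u,w} \<in> E"
        moreover have "\<forall>e\<in>E. \<not> e \<subseteq> {x. f x \<noteq> 0}" using f by (simp add: indep_def)
        ultimately have "\<not> {u,w} \<subseteq> {x. f x \<noteq> 0}" by (metis (no_types, lifting))
        then show "f u * f w = 0" by auto
      qed
      ultimately show "f \<in> PiE UNIV S \<and> (\<forall>x. 0 \<le> f x) \<and> sum f V = 1 \<and> (\<forall>u w. {u,w} \<in> E \<longrightarrow> f u * f w = 0)"
        using f by (simp add: indep_def)
    qed
    finally show "f \<in> \<Inter>KK \<longleftrightarrow> f \<in> topspace (geometric_realization (independence_complex V E))"
      by (simp add: mem_GR[OF V])
  qed
  have "compactin ?P (\<Inter>KK)"
    by (rule closed_compactin_Inter[OF cK]) (simp add: KK_def, erule closed)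
  then have "compact_space (subtopology ?P (\<Inter>KK))" by (rule compact_space_subtopology)
  moreover have "subtopology ?P (\<Inter>KK) = geometric_realization (independence_complex V E)"
    unfolding eq topspace_GR by (simp add: geometric_realization_def)
  ultimately show ?thesis by simp
qed


definition smap :: "('a \<Rightarrow> 'b) \<Rightarrow> 'a susp_pt \<Rightarrow> 'b susp_pt" where
  "smap h z = (case z of North \<Rightarrow> North | South \<Rightarrow> South | Mid x t \<Rightarrow> Mid (h x) t)"

lemma smap_sq: "smap h ((\<lambda>(x, t). if t = 1 then North else if t = -1 then South else Mid x t) z)
   = (\<lambda>(x, t). if t = 1 then North else if t = -1 then South else Mid x t) (h (fst z), snd z)"
  by (cases z) (simp add: smap_def)

lemma cont_smap:
  assumes h: "continuous_map X Y h"
  shows "continuous_map (suspension X) (suspension Y) (smap h)"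
  unfolding suspension_def
proof (rule cont_from_quot)
  let ?I = "subtopology euclideanreal {-1..1}"
  have "continuous_map (prod_topology X ?I) (prod_topology Y ?I) (\<lambda>z. (h (fst z), snd z))"
    by (intro continuous_intros continuous_map_compose[OF continuous_map_fst h, unfolded o_def])
  from this show "continuous_map (prod_topology X ?I)
     (quotient_topology (prod_topology Y ?I) (\<lambda>(x, t). if t = 1 then North else if t = - 1 then South else Mid x t))
     (\<lambda>x. smap h ((\<lambda>(x, t). if t = 1 then North else if t = - 1 then South else Mid x t) x))"
    unfolding smap_sq
    using continuous_map_compose[OF \<open>continuous_map (prod_topology X ?I) (prod_topology Y ?I) _\<close>
       cont_quot_map[of _ "\<lambda>(x, t). if t = 1 then North else if t = - 1 then South else Mid x t"]]
    unfolding o_def by simp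
qed

lemma susp_homeo:
  assumes "X homeomorphic_space Y"
  shows "suspension X homeomorphic_space suspension Y"
proof -
  obtain h k where hk: "homeomorphic_maps X Y h k" using assms by (auto simp: homeomorphic_space_def)
  have ch: "continuous_map X Y h" and ck: "continuous_map Y X k" and kh: "\<And>x. x \<in> topspace X \<Longrightarrow> k (h x) = x"
    and hk': "\<And>y. y \<in> topspace Y \<Longrightarrow> h (k y) = y"
    using hk by (auto simp: homeomorphic_maps_def)
  have "homeomorphic_maps (suspension X) (suspension Y) (smap h) (smap k)"
    unfolding homeomorphic_maps_def
  proof (intro conjI cont_smap ch ck ballI)
    fix z assume "z \<in> topspace (suspension X)"
    then obtain x t where "x \<in> topspace X" "z = (\<lambda>(x, t). if t = 1 then North else if t = -1 then South else Mid x t) (x, t)"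
      unfolding suspension_def topspace_quot by auto
    then show "smap k (smap h z) = z" using kh by (simp add: smap_def)
  next
    fix z assume "z \<in> topspace (suspension Y)"
    then obtain x t where "x \<in> topspace Y" "z = (\<lambda>(x, t). if t = 1 then North else if t = -1 then South else Mid x t) (x, t)"
      unfolding suspension_def topspace_quot by auto
    then show "smap h (smap k z) = z" using hk' by (simp add: smap_def)
  qed
  then show ?thesis by (rule homeomorphic_maps_imp_homeomorphic_space)
qed

lemma compact_susp:
  assumes "compact_space X"
  shows "compact_space (suspension X)"
proof -
  let ?I = "subtopology euclideanreal {-1..1::real}"
  let ?q = "(\<lambda>(x, t). if t = 1 then North else if t = -1 then South else Mid x t) :: _ \<Rightarrow> 'a susp_pt"
  have "compact_space ?I" by (intro compact_space_subtopology) simp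
  then have "compact_space (prod_topology X ?I)" using assms by (simp add: compact_space_prod_topology)
  then have "compactin (suspension X) (?q ` topspace (prod_topology X ?I))"
    unfolding suspension_def compact_space_def by (rule image_compactin[OF _ cont_quot_map])
  then show ?thesis unfolding compact_space_def suspension_def topspace_quot .
qed


lemma join_lemma:
  fixes a b :: 'a
  assumes V: "finite V" and aV: "a \<notin> V" and bV: "b \<notin> V" and ab: "a \<noteq> b" and abE: "{a, b} \<in> E"
    and dbl: "\<forall>e\<in>E. \<exists>u w. u \<noteq> w \<and> e = {u, w}"
    and noE: "\<forall>x\<in>V. {x, a} \<notin> E \<and> {x, b} \<notin> E" and ne: "V \<noteq> {}"
  shows "geometric_realization (independence_complex (insert a (insert b V)) E) homeomorphic_space
         suspension (geometric_realization (independence_complex V E))"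
proof -
  define V' where "V' = insert a (insert b V)"
  let ?X = "geometric_realization (independence_complex V E)"
  let ?Y = "geometric_realization (independence_complex V' E)"
  let ?I = "subtopology euclideanreal {-1..1::real}"
  let ?P = "prod_topology ?X ?I"
  let ?q = "(\<lambda>(x, t). if t = 1 then North else if t = -1 then South else Mid x t) :: _ \<Rightarrow> ('a \<Rightarrow> real) susp_pt"
  have V'f: "finite V'" using V by (simp add: V'_def)
  have memX: "f \<in> topspace ?X \<longleftrightarrow> indep V E f" for f by (rule mem_GR[OF V])
  have memY: "f \<in> topspace ?Y \<longleftrightarrow> indep V' E f" for f by (rule mem_GR[OF V'f])
  have sumV': "sum f V' = f a + f b + sum f V" for f :: "'a \<Rightarrow> real"
    using V aV bV ab by (simp add: V'_def)
  define phi where "phi g t = (\<lambda>v. (1 - \<bar>t\<bar>) * g v + (if v = a then max t 0 else 0) + (if v = b then max (- t) 0 else 0))"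
    for g :: "'a \<Rightarrow> real" and t :: real
  define Phi where "Phi z = (case z of North \<Rightarrow> phi (\<lambda>_. 0) 1 | South \<Rightarrow> phi (\<lambda>_. 0) (-1) | Mid g t \<Rightarrow> phi g t)" for z
  have PhiQ: "Phi (?q (g, t)) = phi g t" for g t
    by (auto simp: Phi_def phi_def fun_eq_iff)
  have phi_a: "phi g t a = max t 0" if "indep V E g" for g t
    using that aV ab by (simp add: phi_def indep_def)
  have phi_b: "phi g t b = max (- t) 0" if "indep V E g" for g t
    using that bV ab by (simp add: phi_def indep_def)
  have phi_V: "phi g t v = (1 - \<bar>t\<bar>) * g v" if "v \<in> V" for g t v
    using that aV bV by (auto simp: phi_def)
  have phi_out: "phi g t v = 0" if "indep V E g" "v \<notin> V'" for g t v
    using that by (auto simp: phi_def indep_def V'_def)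
  have phi_mem: "indep V' E (phi g t)" if g: "indep V E g" and t: "-1 \<le> t" "t \<le> 1" for g t
  proof -
    have g0: "\<And>v. 0 \<le> g v" using g by (simp add: indep_def)
    have nn: "0 \<le> phi g t v" for v unfolding phi_def using t g0 by (auto intro!: add_nonneg_nonneg mult_nonneg_nonneg)
    have "sum (phi g t) V = (1 - \<bar>t\<bar>) * sum g V" using phi_V by (simp add: sum_distrib_left)
    also have "\<dots> = 1 - \<bar>t\<bar>" using g by (simp add: indep_def)
    finally have "sum (phi g t) V' = max t 0 + max (- t) 0 + (1 - \<bar>t\<bar>)"
      using sumV' phi_a[OF g] phi_b[OF g] by simp
    also have "\<dots> = 1" by (simp add: max_def abs_if)
    finally have s: "sum (phi g t) V' = 1" .
    have supp: "v = a \<and> t > 0 \<or> v = b \<and> t < 0 \<or> (v \<in> V \<and> g v \<noteq> 0)" if "phi g t v \<noteq> 0" for v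
    proof -
      have "v \<in> V'" using that phi_out[OF g] by blast
      then consider "v = a" | "v = b" | "v \<in> V" by (auto simp: V'_def)
      then show ?thesis
      proof cases
        case 1 then show ?thesis using that phi_a[OF g] by (auto simp: max_def split: if_splits)
      next
        case 2 then show ?thesis using that phi_b[OF g] by (auto simp: max_def split: if_splits)
      next
        case 3 then show ?thesis using that phi_V by auto
      qed
    qed
    have gE: "\<And>e. e \<in> E \<Longrightarrow> \<not> e \<subseteq> {x. g x \<noteq> 0}" using g by (simp add: indep_def)
    have e: "\<not> e \<subseteq> {v. phi g t v \<noteq> 0}" if e: "e \<in> E" for e
    proof
      assume sub: "e \<subseteq> {v. phi g t v \<noteq> 0}"
      have "\<exists>u w. u \<noteq> w \<and> e = {u, w}" using dbl e by (rule bspec)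
      then obtain u w where uw: "u \<noteq> w" "e = {u, w}" by blast
      have su: "phi g t u \<noteq> 0" and sw: "phi g t w \<noteq> 0" using sub uw by auto
      have E1: "{u, w} \<in> E" using e uw by simp
      from supp[OF su] supp[OF sw] show False
      proof (elim disjE conjE)
        assume "u \<in> V" "g u \<noteq> 0" "w \<in> V" "g w \<noteq> 0"
        then show False using gE[OF E1] by auto
      next
        assume "u = a" "w \<in> V" then show False using noE E1 by (auto simp: insert_commute)
      next
        assume "u = b" "w \<in> V" then show False using noE E1 by (auto simp: insert_commute)
      next
        assume "w = a" "u \<in> V" then show False using noE E1 by auto
      next
        assume "w = b" "u \<in> V" then show False using noE E1 by auto
      qed (use uw in auto)
    qed
    show ?thesis unfolding indep_def using nn phi_out[OF g] s e by blast
  qed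
  have topP: "topspace ?P = topspace ?X \<times> {-1..1}" by simp
  have topS: "topspace (suspension ?X) = ?q ` topspace ?P"
    unfolding suspension_def topspace_quot ..
  have contPhi: "continuous_map (suspension ?X) ?Y Phi"
    unfolding suspension_def
  proof (rule cont_from_quot)
    have e: "(\<lambda>z. Phi (?q z)) = (\<lambda>z. phi (fst z) (snd z))"
    proof
      fix z :: "('a \<Rightarrow> real) \<times> real"
      obtain g t where "z = (g, t)" by (cases z)
      then show "Phi (?q z) = phi (fst z) (snd z)" by (simp only: PhiQ fst_conv snd_conv)
    qed
    have cs: "continuous_map ?P euclideanreal snd"
      using continuous_map_compose[OF continuous_map_snd continuous_map_from_subtopology[OF continuous_map_id]]
      by (simp add: o_def)
    have cf: "continuous_map ?P euclideanreal (\<lambda>z. fst z v)" for v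
      using continuous_map_compose[OF continuous_map_fst cont_from_GR] by (simp add: o_def)
    show "continuous_map ?P ?Y (\<lambda>z. Phi (?q z))"
      unfolding e cont_into_GR
    proof (intro conjI allI)
      fix v
      show "continuous_map ?P euclideanreal (\<lambda>z. phi (fst z) (snd z) v)"
        unfolding phi_def by (intro continuous_intros cs cf)
      show "(\<lambda>z. phi (fst z) (snd z)) \<in> topspace ?P \<rightarrow> topspace ?Y"
        using phi_mem by (auto simp: memX memY)
    qed
  qed
  have inj: "inj_on Phi (topspace (suspension ?X))"
  proof (rule inj_onI)
    fix z1 z2 assume z1: "z1 \<in> topspace (suspension ?X)" and z2: "z2 \<in> topspace (suspension ?X)"
      and eq: "Phi z1 = Phi z2"
    obtain g1 t1 where g1: "indep V E g1" "-1 \<le> t1" "t1 \<le> 1" and z1e: "z1 = ?q (g1, t1)"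
      using z1 unfolding topS by (auto simp: memX)
    obtain g2 t2 where g2: "indep V E g2" "-1 \<le> t2" "t2 \<le> 1" and z2e: "z2 = ?q (g2, t2)"
      using z2 unfolding topS by (auto simp: memX)
    have pe: "phi g1 t1 = phi g2 t2" using eq z1e z2e PhiQ by simp
    have "max t1 0 = max t2 0" using pe phi_a[OF g1(1)] phi_a[OF g2(1)] by metis
    moreover have "max (- t1) 0 = max (- t2) 0" using pe phi_b[OF g1(1)] phi_b[OF g2(1)] by metis
    ultimately have tt: "t1 = t2" by (auto simp: max_def split: if_splits)
    show "z1 = z2"
    proof (cases "\<bar>t1\<bar> = 1")
      case True then show ?thesis using z1e z2e tt by auto
    next
      case False
      have "g1 v = g2 v" for v
      proof (cases "v \<in> V")
        case True
        then have "(1 - \<bar>t1\<bar>) * g1 v = (1 - \<bar>t1\<bar>) * g2 v" using pe phi_V tt by metis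
        then show ?thesis using False by simp
      next
        case False then show ?thesis using g1 g2 by (simp add: indep_def)
      qed
      then show ?thesis using z1e z2e tt by (simp add: fun_eq_iff)
    qed
  qed
  have surj: "Phi ` topspace (suspension ?X) = topspace ?Y"
  proof
    show "Phi ` topspace (suspension ?X) \<subseteq> topspace ?Y"
      using contPhi by (auto simp: continuous_map_def)
  next
    show "topspace ?Y \<subseteq> Phi ` topspace (suspension ?X)"
    proof
      fix f assume "f \<in> topspace ?Y"
      then have f: "indep V' E f" by (simp add: memY)
      have f0: "\<And>v. 0 \<le> f v" and fout: "\<And>v. v \<notin> V' \<Longrightarrow> f v = 0" and fs: "sum f V' = 1"
        and fE: "\<And>e. e \<in> E \<Longrightarrow> \<not> e \<subseteq> {x. f x \<noteq> 0}" using f by (auto simp: indep_def)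
      have fab: "f a = 0 \<or> f b = 0" using fE[OF abE] by auto
      define t where "t = f a - f b"
      have at: "\<bar>t\<bar> = f a + f b" using fab f0[of a] f0[of b] by (auto simp: t_def)
      have sV: "sum f V = 1 - \<bar>t\<bar>" using fs sumV' at by simp
      have sV0: "sum f V \<ge> 0" using f0 by (simp add: sum_nonneg)
      have t1: "-1 \<le> t" "t \<le> 1" using sV sV0 by auto
      have fa: "f a = max t 0" and fb: "f b = max (- t) 0"
        using fab f0[of a] f0[of b] by (auto simp: t_def max_def)
      obtain g where g: "indep V E g" and fg: "f = phi g t"
      proof (cases "\<bar>t\<bar> = 1")
        case True
        obtain x0 where x0: "x0 \<in> V" using ne by blast
        define g where "g = (\<lambda>v. if v = x0 then 1 else (0::real))"
        have "indep V E g"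
          unfolding indep_def
        proof (intro conjI allI ballI impI)
          show "sum g V = 1" using V x0 by (simp add: g_def)
          fix e assume e: "e \<in> E"
          have "\<exists>u w. u \<noteq> w \<and> e = {u, w}" using dbl e by (rule bspec)
          then obtain u w where uw: "u \<noteq> w" "e = {u, w}" by blast
          show "\<not> e \<subseteq> {x. g x \<noteq> 0}" using uw by (auto simp: g_def)
        qed (use x0 in \<open>auto simp: g_def\<close>)
        moreover have "f = phi g t"
        proof
          fix v
          show "f v = phi g t v"
          proof (cases "v \<in> V")
            case True
            have "sum f V = 0" using sV True \<open>\<bar>t\<bar> = 1\<close> by simp
            then have "f v = 0" using V f0 True by (simp add: sum_nonneg_eq_0_iff)
            then show ?thesis using phi_V[OF True] \<open>\<bar>t\<bar> = 1\<close> by simp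
          next
            case False
            then consider "v = a" | "v = b" | "v \<notin> V'" by (auto simp: V'_def)
            then show ?thesis
            proof cases
              case 1 then show ?thesis using fa phi_a[OF \<open>indep V E g\<close>] by simp
            next
              case 2 then show ?thesis using fb phi_b[OF \<open>indep V E g\<close>] by simp
            next
              case 3 then show ?thesis using fout phi_out[OF \<open>indep V E g\<close>] by simp
            qed
          qed
        qed
        ultimately show ?thesis using that by blast
      next
        case False
        then have pos: "1 - \<bar>t\<bar> > 0" using t1 by auto
        define g where "g = (\<lambda>v. if v \<in> V then f v / (1 - \<bar>t\<bar>) else 0)"
        have gi: "indep V E g"
          unfolding indep_def
        proof (intro conjI allI ballI impI)
          show "0 \<le> g x" for x using f0 pos by (simp add: g_def)
          show "g x = 0" if "x \<notin> V" for x using that by (simp add: g_def)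
          have "sum g V = sum f V / (1 - \<bar>t\<bar>)" by (simp add: g_def sum_divide_distrib)
          then show "sum g V = 1" using sV pos by simp
          fix e assume e: "e \<in> E"
          have "{x. g x \<noteq> 0} \<subseteq> {x. f x \<noteq> 0}" by (auto simp: g_def)
          then show "\<not> e \<subseteq> {x. g x \<noteq> 0}" using fE[OF e] by blast
        qed
        moreover have "f = phi g t"
        proof
          fix v
          show "f v = phi g t v"
          proof (cases "v \<in> V")
            case True
            then show ?thesis using phi_V[OF True] pos by (simp add: g_def)
          next
            case False
            then consider "v = a" | "v = b" | "v \<notin> V'" by (auto simp: V'_def)
            then show ?thesis
            proof cases
              case 1 then show ?thesis using fa phi_a[OF gi] by simp
            next
              case 2 then show ?thesis using fb phi_b[OF gi] by simp
            next
              case 3 then show ?thesis using fout phi_out[OF gi] by simp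
            qed
          qed
        qed
        ultimately show ?thesis using that by blast
      qed
      have "(g, t) \<in> topspace ?P" using g t1 by (simp add: memX)
      then have "?q (g, t) \<in> topspace (suspension ?X)" unfolding topS by (rule imageI)
      moreover have "f = Phi (?q (g, t))" by (simp only: fg PhiQ)
      ultimately show "f \<in> Phi ` topspace (suspension ?X)" by (rule rev_image_eqI)
    qed
  qed
  have cpt: "compact_space (suspension ?X)"
    by (rule compact_susp[OF compact_GR[OF V dbl]])
  have "homeomorphic_map (suspension ?X) ?Y Phi"
    by (rule bijective_closed_imp_homeomorphic_map[OF contPhi
          continuous_imp_closed_map[OF contPhi cpt Hausdorff_GR] surj inj])
  then have "suspension ?X homeomorphic_space ?Y" by (rule homeomorphic_map_imp_homeomorphic_space)
  then show ?thesis unfolding V'_def by (subst homeomorphic_space_sym)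
qed


fun hadj :: "nat \<Rightarrow> nat \<Rightarrow> vert \<Rightarrow> vert \<Rightarrow> bool" where
  "hadj k n (U i a) (U i' b) = (1 \<le> i \<and> i' = i + 1 \<and> i + 1 \<le> k \<and> 1 \<le> a \<and> a \<le> n \<and> 1 \<le> b \<and> b \<le> n \<and> a \<noteq> b)"
| "hadj k n (U i a) V1 = (i = 1 \<and> 2 \<le> a \<and> a \<le> n)"
| "hadj k n (U i a) V2 = (i = k \<and> 1 \<le> a \<and> a \<le> n \<and> a \<noteq> 2)"
| "hadj k n _ _ = False"

fun radj :: "vert \<Rightarrow> vert \<Rightarrow> bool" where
  "radj V1 W1 = True"
| "radj V2 W2 = True"
| "radj _ _ = False"

lemma H_edges_iff: "{x, y} \<in> H_edges k n \<longleftrightarrow> hadj k n x y \<or> hadj k n y x"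
proof
  assume "{x, y} \<in> H_edges k n"
  then show "hadj k n x y \<or> hadj k n y x"
    unfolding H_edges_def by (auto simp: doubleton_eq_iff)
next
  assume h: "hadj k n x y \<or> hadj k n y x"
  show "{x, y} \<in> H_edges k n"
  proof (cases x; cases y)
  qed (use h in \<open>auto simp: H_edges_def doubleton_eq_iff insert_commute\<close>)
qed

lemma Hr_edges_iff: "{x, y} \<in> Hr_edges k n \<longleftrightarrow> hadj k n x y \<or> hadj k n y x \<or> radj x y \<or> radj y x"
proof -
  have "{x, y} \<in> {{V1, W1}, {V2, W2}} \<longleftrightarrow> radj x y \<or> radj y x"
    by (cases x; cases y) (auto simp: doubleton_eq_iff)
  then show ?thesis unfolding Hr_edges_def using H_edges_iff by auto
qed

lemma H_edges_dbl: "\<forall>e\<in>H_edges k n. \<exists>u w. u \<noteq> w \<and> e = {u, w}"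
  unfolding H_edges_def
  apply auto
  apply (rule_tac x="U i a" in exI, rule_tac x = "U (Suc i) b" in exI)
  by simp

lemma Hr_edges_dbl: "\<forall>e\<in>Hr_edges k n. \<exists>u w. u \<noteq> w \<and> e = {u, w}"
  using H_edges_dbl unfolding Hr_edges_def by auto

lemma U_in_H_verts[simp]: "U i j \<in> H_verts k n \<longleftrightarrow> 1 \<le> i \<and> i \<le> k \<and> 1 \<le> j \<and> j \<le> n"
  and V_in_H_verts[simp]: "V1 \<in> H_verts k n" "V2 \<in> H_verts k n" "W1 \<notin> H_verts k n" "W2 \<notin> H_verts k n"
  by (auto simp: H_verts_def)

lemma in_Hr_verts[simp]: "x \<in> Hr_verts k n \<longleftrightarrow> x \<in> H_verts k n \<or> x = W1 \<or> x = W2"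
  by (auto simp: Hr_verts_def)

lemma finite_H_verts: "finite (H_verts k n)"
proof -
  have "{U i j | i j. 1 \<le> i \<and> i \<le> k \<and> 1 \<le> j \<and> j \<le> n} = (\<lambda>(i, j). U i j) ` ({1..k} \<times> {1..n})"
    by auto
  then show ?thesis unfolding H_verts_def by simp
qed

lemma finite_Hr_verts: "finite (Hr_verts k n)"
  using finite_H_verts by (simp add: Hr_verts_def)


lemma iso_map_mem:
  assumes bij: "bij_betw s V W" and fin: "finite V"
    and Eiff: "\<forall>x\<in>V. \<forall>y\<in>V. {x, y} \<in> E \<longleftrightarrow> {s x, s y} \<in> E'"
    and dbl': "\<forall>e\<in>E'. \<exists>u w. u \<noteq> w \<and> e = {u, w}"
    and f: "indep V E f"
  shows "indep W E' (\<lambda>y. if y \<in> W then f (inv_into V s y) else 0)"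
proof -
  let ?t = "inv_into V s"
  let ?g = "\<lambda>y. if y \<in> W then f (?t y) else 0"
  have bt: "bij_betw ?t W V" using bij by (rule bij_betw_inv_into)
  have tV: "?t y \<in> V" if "y \<in> W" for y using bt that by (auto simp: bij_betw_def)
  have st: "s (?t y) = y" if "y \<in> W" for y using bij that by (simp add: bij_betw_inv_into_right)
  have f0: "\<And>x. 0 \<le> f x" and fs: "sum f V = 1" and fE: "\<And>e. e \<in> E \<Longrightarrow> \<not> e \<subseteq> {x. f x \<noteq> 0}"
    using f by (auto simp: indep_def)
  have "sum ?g W = sum (f \<circ> ?t) W" by (intro sum.cong) auto
  also have "\<dots> = sum f V" using sum.reindex_bij_betw[OF bt, of f] by (simp add: o_def)
  finally have s: "sum ?g W = 1" using fs by simp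
  have e: "\<not> e \<subseteq> {y. ?g y \<noteq> 0}" if e: "e \<in> E'" for e
  proof
    assume sub: "e \<subseteq> {y. ?g y \<noteq> 0}"
    have "\<exists>u w. u \<noteq> w \<and> e = {u, w}" using dbl' e by (rule bspec)
    then obtain u w where uw: "e = {u, w}" by blast
    have u: "u \<in> W" "f (?t u) \<noteq> 0" and w: "w \<in> W" "f (?t w) \<noteq> 0"
      using sub uw by (auto split: if_splits)
    have "{s (?t u), s (?t w)} \<in> E'" using e uw st u w by simp
    then have "{?t u, ?t w} \<in> E" using Eiff tV u w by blast
    then show False using fE u w by auto
  qed
  show ?thesis unfolding indep_def using f0 s e by auto
qed

lemma iso_lemma:
  assumes bij: "bij_betw s V W" and fin: "finite V"
    and Eiff: "\<forall>x\<in>V. \<forall>y\<in>V. {x, y} \<in> E \<longleftrightarrow> {s x, s y} \<in> E'"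
    and dbl: "\<forall>e\<in>E. \<exists>u w. u \<noteq> w \<and> e = {u, w}"
    and dbl': "\<forall>e\<in>E'. \<exists>u w. u \<noteq> w \<and> e = {u, w}"
  shows "geometric_realization (independence_complex V E) homeomorphic_space
         geometric_realization (independence_complex W E')"
proof -
  let ?t = "inv_into V s"
  have finW: "finite W" using bij fin bij_betw_finite by blast
  have bt: "bij_betw ?t W V" using bij by (rule bij_betw_inv_into)
  have tt: "inv_into W ?t x = s x" if "x \<in> V" for x using bij that by (rule inv_into_inv_into_eq)
  have st: "s (?t y) = y" if "y \<in> W" for y using bij that by (simp add: bij_betw_inv_into_right)
  have ts: "?t (s x) = x" if "x \<in> V" for x using bij that by (simp add: bij_betw_inv_into_left)
  have sW: "s x \<in> W" if "x \<in> V" for x using bij that by (auto simp: bij_betw_def)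
  have Eiff': "\<forall>x\<in>W. \<forall>y\<in>W. {x, y} \<in> E' \<longleftrightarrow> {?t x, ?t y} \<in> E"
  proof (intro ballI)
    fix x y assume "x \<in> W" "y \<in> W"
    moreover have "?t x \<in> V" "?t y \<in> V" using bt \<open>x \<in> W\<close> \<open>y \<in> W\<close> by (auto simp: bij_betw_def)
    ultimately show "{x, y} \<in> E' \<longleftrightarrow> {?t x, ?t y} \<in> E" using Eiff st by metis
  qed
  define phi where "phi f = (\<lambda>y. if y \<in> W then f (?t y) else 0)" for f :: "'a \<Rightarrow> real"
  define psi where "psi g = (\<lambda>x. if x \<in> V then g (s x) else 0)" for g :: "'b \<Rightarrow> real"
  let ?X = "geometric_realization (independence_complex V E)"
  let ?Y = "geometric_realization (independence_complex W E')"
  have memX: "f \<in> topspace ?X \<longleftrightarrow> indep V E f" for f by (rule mem_GR[OF fin])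
  have memY: "f \<in> topspace ?Y \<longleftrightarrow> indep W E' f" for f by (rule mem_GR[OF finW])
  have phim: "indep W E' (phi f)" if "indep V E f" for f
    unfolding phi_def by (rule iso_map_mem[OF bij fin Eiff dbl' that])
  have psim: "indep V E (psi g)" if "indep W E' g" for g
  proof -
    have "indep V E (\<lambda>y. if y \<in> V then g (inv_into W ?t y) else 0)"
      by (rule iso_map_mem[OF bt finW Eiff' dbl that])
    moreover have "(\<lambda>y. if y \<in> V then g (inv_into W ?t y) else 0) = psi g"
      by (auto simp: psi_def tt fun_eq_iff)
    ultimately show ?thesis by simp
  qed
  have "homeomorphic_maps ?X ?Y phi psi"
    unfolding homeomorphic_maps_def
  proof (intro conjI ballI)
    show "continuous_map ?X ?Y phi" unfolding cont_into_GR
    proof (intro conjI allI)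
      fix y show "continuous_map ?X euclideanreal (\<lambda>x. phi x y)"
        unfolding phi_def by (cases "y \<in> W") (auto intro: cont_from_GR)
      show "phi \<in> topspace ?X \<rightarrow> topspace ?Y" using phim by (auto simp: memX memY)
    qed
    show "continuous_map ?Y ?X psi" unfolding cont_into_GR
    proof (intro conjI allI)
      fix y show "continuous_map ?Y euclideanreal (\<lambda>x. psi x y)"
        unfolding psi_def by (cases "y \<in> V") (auto intro: cont_from_GR)
      show "psi \<in> topspace ?Y \<rightarrow> topspace ?X" using psim by (auto simp: memX memY)
    qed
    fix f assume "f \<in> topspace ?X"
    then have "indep V E f" by (simp add: memX)
    then show "psi (phi f) = f"
      by (auto simp: psi_def phi_def fun_eq_iff ts sW indep_def)
  next
    fix g assume "g \<in> topspace ?Y"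
    then have "indep W E' g" by (simp add: memY)
    moreover have "?t y \<in> V" if "y \<in> W" for y using bt that by (auto simp: bij_betw_def)
    ultimately show "phi (psi g) = g"
      by (auto simp: psi_def phi_def fun_eq_iff st indep_def)
  qed
  then show ?thesis by (rule homeomorphic_maps_imp_homeomorphic_space)
qed


lemma hadj_simps[simp]:
  "hadj k n x W1 = False" "hadj k n x W2 = False" "hadj k n W1 x = False" "hadj k n W2 x = False"
  "hadj k n V1 x = False" "hadj k n V2 x = False"
  by (cases x; simp)+

lemma radj_simps[simp]:
  "radj x W1 \<longleftrightarrow> x = V1" "radj x W2 \<longleftrightarrow> x = V2" "radj W1 x = False" "radj W2 x = False"
  "radj (U i j) x = False" "radj x (U i j) = False" "radj x V1 = False" "radj x V2 = False"
  by (cases x; simp)+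

definition R1 :: "nat \<Rightarrow> nat \<Rightarrow> vert set" where
  "R1 k n = {x. case x of U i j \<Rightarrow> (i = 1 \<and> 2 \<le> j \<and> j \<le> n) \<or> (i = k \<and> 1 \<le> j \<and> j \<le> n \<and> j \<noteq> 2) | _ \<Rightarrow> False}"

lemma in_R1[simp]: "U i j \<in> R1 k n \<longleftrightarrow> (i = 1 \<and> 2 \<le> j \<and> j \<le> n) \<or> (i = k \<and> 1 \<le> j \<and> j \<le> n \<and> j \<noteq> 2)"
  "V1 \<notin> R1 k n" "V2 \<notin> R1 k n" "W1 \<notin> R1 k n" "W2 \<notin> R1 k n"
  by (simp_all add: R1_def)

definition p1 :: "vert \<Rightarrow> vert" where
  "p1 x = (case x of U i j \<Rightarrow> if i = 1 then W1 else W2 | _ \<Rightarrow> W1)"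

lemma step1:
  assumes k: "k \<ge> 2"
  shows "geometric_realization (independence_complex (Hr_verts k n) (Hr_edges k n)) homotopy_equivalent_space
         geometric_realization (independence_complex (Hr_verts k n - R1 k n) (Hr_edges k n))"
proof (rule fold_lemma[OF finite_Hr_verts _ _ Hr_edges_dbl])
  show "R1 k n \<subseteq> Hr_verts k n"
  proof
    fix x assume "x \<in> R1 k n" then show "x \<in> Hr_verts k n" using k by (cases x) auto
  qed
  show "p1 ` R1 k n \<subseteq> Hr_verts k n - R1 k n"
  proof
    fix y assume "y \<in> p1 ` R1 k n"
    then obtain x where "x \<in> R1 k n" "y = p1 x" by blast
    then show "y \<in> Hr_verts k n - R1 k n" by (cases x) (auto simp: p1_def)
  qed
  show "\<forall>x\<in>R1 k n. \<forall>y\<in>Hr_verts k n. {p1 x, y} \<in> Hr_edges k n \<longrightarrow> {x, y} \<in> Hr_edges k n"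
  proof (intro ballI impI)
    fix x y assume x: "x \<in> R1 k n" and "y \<in> Hr_verts k n" and e: "{p1 x, y} \<in> Hr_edges k n"
    from x obtain i j where xe: "x = U i j" by (cases x) auto
    show "{x, y} \<in> Hr_edges k n"
    proof (cases "i = 1")
      case True
      then have "y = V1" using e xe by (simp add: p1_def Hr_edges_iff)
      then show ?thesis using x xe True k by (simp add: Hr_edges_iff)
    next
      case False
      then have "y = V2" using e xe by (simp add: p1_def Hr_edges_iff)
      then show ?thesis using x xe False k by (simp add: Hr_edges_iff)
    qed
  qed
  show "\<forall>x\<in>R1 k n. \<forall>x'\<in>R1 k n. {p1 x, p1 x'} \<notin> Hr_edges k n"
  proof (intro ballI)
    fix x x' assume "x \<in> R1 k n" "x' \<in> R1 k n"
    then obtain i j i' j' where "x = U i j" "x' = U i' j'" by (cases x; cases x') auto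
    then show "{p1 x, p1 x'} \<notin> Hr_edges k n" by (simp add: p1_def Hr_edges_iff)
  qed
qed

definition Vc :: "nat \<Rightarrow> nat \<Rightarrow> vert set" where
  "Vc k n = {x. case x of U i j \<Rightarrow> (i = 1 \<and> j = 1) \<or> (2 \<le> i \<and> i + 1 \<le> k \<and> 1 \<le> j \<and> j \<le> n) \<or> (i = k \<and> j = 2) | _ \<Rightarrow> False}"

lemma in_Vc[simp]: "U i j \<in> Vc k n \<longleftrightarrow> (i = 1 \<and> j = 1) \<or> (2 \<le> i \<and> i + 1 \<le> k \<and> 1 \<le> j \<and> j \<le> n) \<or> (i = k \<and> j = 2)"
  "V1 \<notin> Vc k n" "V2 \<notin> Vc k n" "W1 \<notin> Vc k n" "W2 \<notin> Vc k n"
  by (simp_all add: Vc_def)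

lemma V_after_step1:
  assumes k: "k \<ge> 2" and n: "n \<ge> 2"
  shows "Hr_verts k n - R1 k n = insert V2 (insert W2 (insert V1 (insert W1 (Vc k n))))"
proof (rule set_eqI)
  fix x show "x \<in> Hr_verts k n - R1 k n \<longleftrightarrow> x \<in> insert V2 (insert W2 (insert V1 (insert W1 (Vc k n))))"
    using k n by (cases x) auto
qed


lemma ex_le2: "(\<exists>i\<le>(2::nat). P i) \<longleftrightarrow> P 0 \<or> P 1 \<or> P 2"
proof -
  have "{..(2::nat)} = {0,1,2}" by auto
  then show ?thesis by (metis (no_types, lifting) atMost_iff insert_iff singletonD)
qed

lemma ex_le3: "(\<exists>i\<le>(3::nat). P i) \<longleftrightarrow> P 0 \<or> P 1 \<or> P 2 \<or> P 3"
proof -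
  have "{..(3::nat)} = {0,1,2,3}" by auto
  then show ?thesis by (metis (no_types, lifting) atMost_iff insert_iff singletonD)
qed

lemma case2:
  assumes n: "n \<ge> 2"
  shows "geometric_realization (independence_complex (insert V2 (insert W2 (insert V1 (insert W1 (Vc 2 n))))) (Hr_edges 2 n))
     homeomorphic_space nsphere 2"
proof -
  define a :: "nat \<Rightarrow> vert" where "a i = (if i = 0 then U 1 1 else if i = 1 then V1 else V2)" for i
  define b :: "nat \<Rightarrow> vert" where "b i = (if i = 0 then U 2 2 else if i = 1 then W1 else W2)" for i
  have at2: "{..(2::nat)} = {0,1,2}" by auto
  have Vc2: "Vc 2 n = {U 1 1, U 2 2}"
  proof (rule set_eqI)
    fix x show "x \<in> Vc 2 n \<longleftrightarrow> x \<in> {U 1 1, U 2 2}" using n by (cases x) auto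
  qed
  have Veq: "insert V2 (insert W2 (insert V1 (insert W1 (Vc 2 n)))) = a ` {..2} \<union> b ` {..2}"
    unfolding Vc2 at2 by (auto simp: a_def b_def)
  show ?thesis
  proof (rule cross_lemma[OF _ _ _ Veq _ Hr_edges_dbl])
    show "inj_on a {..2}" unfolding at2 by (auto simp: a_def inj_on_def)
    show "inj_on b {..2}" unfolding at2 by (auto simp: b_def inj_on_def)
    show "\<forall>i\<le>2. \<forall>j\<le>2. a i \<noteq> b j" by (auto simp: a_def b_def)
    show "\<forall>x\<in>insert V2 (insert W2 (insert V1 (insert W1 (Vc 2 n)))). \<forall>y\<in>insert V2 (insert W2 (insert V1 (insert W1 (Vc 2 n)))).
       ({x, y} \<in> Hr_edges 2 n) = (\<exists>i\<le>2. {x, y} = {a i, b i})"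
      unfolding Vc2 ex_le2 using n by (simp add: a_def b_def Hr_edges_iff doubleton_eq_iff)
  qed
qed

definition R2 :: "nat \<Rightarrow> vert set" where
  "R2 n = {x. case x of U i j \<Rightarrow> i = 2 \<and> 3 \<le> j \<and> j \<le> n | _ \<Rightarrow> False}"

lemma in_R2[simp]: "U i j \<in> R2 n \<longleftrightarrow> i = 2 \<and> 3 \<le> j \<and> j \<le> n"
  "V1 \<notin> R2 n" "V2 \<notin> R2 n" "W1 \<notin> R2 n" "W2 \<notin> R2 n"
  by (simp_all add: R2_def)

lemma case3:
  assumes n: "n \<ge> 3"
  shows "geometric_realization (independence_complex (insert V2 (insert W2 (insert V1 (insert W1 (Vc 3 n))))) (Hr_edges 3 n))
     homotopy_equivalent_space nsphere 3"
proof -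
  define V' where "V' = insert V2 (insert W2 (insert V1 (insert W1 (Vc 3 n))))"
  have finV': "finite V'"
  proof -
    have "V' \<subseteq> Hr_verts 3 n"
    proof
      fix x assume "x \<in> V'" then show "x \<in> Hr_verts 3 n" using n by (cases x) (auto simp: V'_def)
    qed
    then show ?thesis using finite_Hr_verts finite_subset by blast
  qed
  have memV': "x \<in> V' \<longleftrightarrow> x \<in> {V1, V2, W1, W2} \<or> (\<exists>i j. x = U i j \<and> ((i = 1 \<and> j = 1) \<or> (i = 2 \<and> 1 \<le> j \<and> j \<le> n) \<or> (i = 3 \<and> j = 2)))" for x
    by (cases x) (auto simp: V'_def)
  have fold2: "geometric_realization (independence_complex V' (Hr_edges 3 n)) homotopy_equivalent_space
         geometric_realization (independence_complex (V' - R2 n) (Hr_edges 3 n))"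
  proof (rule fold_lemma[OF finV' _ _ Hr_edges_dbl, where p = "\<lambda>_. U 2 1"])
    show "R2 n \<subseteq> V'"
    proof
      fix x assume "x \<in> R2 n" then show "x \<in> V'" by (cases x) (auto simp: V'_def)
    qed
    show "(\<lambda>_. U 2 1) ` R2 n \<subseteq> V' - R2 n" using n by (auto simp: V'_def)
    show "\<forall>x\<in>R2 n. \<forall>y\<in>V'. {U 2 1, y} \<in> Hr_edges 3 n \<longrightarrow> {x, y} \<in> Hr_edges 3 n"
    proof (intro ballI impI)
      fix x y assume x: "x \<in> R2 n" and y: "y \<in> V'" and e: "{U 2 1, y} \<in> Hr_edges 3 n"
      from x obtain j where xe: "x = U 2 j" "3 \<le> j" "j \<le> n" by (cases x) auto
      have "y = U 3 2"
      proof (cases y)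
        case (U i b)
        then show ?thesis using e y by (auto simp: Hr_edges_iff V'_def)
      qed (use e in \<open>auto simp: Hr_edges_iff\<close>)
      then show "{x, y} \<in> Hr_edges 3 n" using xe by (simp add: Hr_edges_iff)
    qed
    show "\<forall>x\<in>R2 n. \<forall>x'\<in>R2 n. {U 2 1, U 2 1} \<notin> Hr_edges 3 n"
      using Hr_edges_iff[of "U 2 1" "U 2 1" 3 n] by simp
  qed
  define a :: "nat \<Rightarrow> vert" where "a i = (if i = 0 then U 1 1 else if i = 1 then U 2 1 else if i = 2 then V1 else V2)" for i
  define b :: "nat \<Rightarrow> vert" where "b i = (if i = 0 then U 2 2 else if i = 1 then U 3 2 else if i = 2 then W1 else W2)" for i
  have at3: "{..(3::nat)} = {0,1,2,3}" by auto
  have V'R: "V' - R2 n = {U 1 1, U 2 1, V1, V2, U 2 2, U 3 2, W1, W2}"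
  proof (rule set_eqI)
    fix x show "x \<in> V' - R2 n \<longleftrightarrow> x \<in> {U 1 1, U 2 1, V1, V2, U 2 2, U 3 2, W1, W2}"
      using n by (cases x) (auto simp: V'_def)
  qed
  have Veq: "V' - R2 n = a ` {..3} \<union> b ` {..3}"
    unfolding V'R at3 by (auto simp: a_def b_def)
  have "geometric_realization (independence_complex (V' - R2 n) (Hr_edges 3 n)) homeomorphic_space nsphere 3"
  proof (rule cross_lemma[OF _ _ _ Veq _ Hr_edges_dbl])
    show "inj_on a {..3}" unfolding at3 by (auto simp: a_def inj_on_def)
    show "inj_on b {..3}" unfolding at3 by (auto simp: b_def inj_on_def)
    show "\<forall>i\<le>3. \<forall>j\<le>3. a i \<noteq> b j" by (auto simp: a_def b_def)
    show "\<forall>x\<in>V' - R2 n. \<forall>y\<in>V' - R2 n. ({x, y} \<in> Hr_edges 3 n) = (\<exists>i\<le>3. {x, y} = {a i, b i})"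
      unfolding V'R ex_le3 using n by (simp add: a_def b_def Hr_edges_iff doubleton_eq_iff)
  qed
  then show ?thesis unfolding V'_def[symmetric]
    using fold2 homeomorphic_imp_homotopy_equivalent_space homotopy_eqv_trans by blast
qed


definition sig :: "nat \<Rightarrow> vert \<Rightarrow> vert" where
  "sig k x = (case x of U i j \<Rightarrow> if i = 1 then V1 else if i = k then V2 else U (i - 1) j | _ \<Rightarrow> V1)"

lemma sig_U: "sig k (U i j) = (if i = 1 then V1 else if i = k then V2 else U (i - 1) j)"
  by (simp add: sig_def)

lemma sig_edges:
  assumes k: "k \<ge> 4" and n: "n \<ge> 2" and x: "U i a \<in> Vc k n" and y: "U i' b \<in> Vc k n"
  shows "(hadj k n (U i a) (U i' b) \<or> hadj k n (U i' b) (U i a)) \<longleftrightarrow>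
         (hadj (k - 2) n (sig k (U i a)) (sig k (U i' b)) \<or> hadj (k - 2) n (sig k (U i' b)) (sig k (U i a)))"
  using k n x y by (auto simp: sig_U)

lemma finite_Vc: "finite (Vc k n)"
proof -
  have "Vc k n \<subseteq> insert (U k 2) (Hr_verts (Suc k) (n + 2))"
  proof
    fix x assume "x \<in> Vc k n" then show "x \<in> insert (U k 2) (Hr_verts (Suc k) (n + 2))" by (cases x) auto
  qed
  then show ?thesis using finite_Hr_verts finite_subset by blast
qed

lemma sig_bij:
  assumes k: "k \<ge> 4" and n: "n \<ge> 2"
  shows "bij_betw (sig k) (Vc k n) (H_verts (k - 2) n)"
  unfolding bij_betw_def
proof
  show "inj_on (sig k) (Vc k n)"
  proof (rule inj_onI)
    fix x y assume x: "x \<in> Vc k n" and y: "y \<in> Vc k n" and e: "sig k x = sig k y"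
    obtain i a where xe: "x = U i a" using x by (cases x) auto
    obtain i' b where ye: "y = U i' b" using y by (cases y) auto
    show "x = y" using x y e k unfolding xe ye by (auto simp: sig_U split: if_splits)
  qed
  show "sig k ` Vc k n = H_verts (k - 2) n"
  proof (rule set_eqI)
    fix z show "z \<in> sig k ` Vc k n \<longleftrightarrow> z \<in> H_verts (k - 2) n"
    proof
      assume "z \<in> sig k ` Vc k n"
      then obtain x where x: "x \<in> Vc k n" and z: "z = sig k x" by blast
      obtain i a where xe: "x = U i a" using x by (cases x) auto
      show "z \<in> H_verts (k - 2) n" using x z k unfolding xe by (auto simp: sig_U)
    next
      assume z: "z \<in> H_verts (k - 2) n"
      show "z \<in> sig k ` Vc k n"
      proof (cases z)
        case (U i j)
        then have "z = sig k (U (i + 1) j)" "U (i + 1) j \<in> Vc k n" using z k by (auto simp: sig_U)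
        then show ?thesis by blast
      next
        case V1
        then have "z = sig k (U 1 1)" "U 1 1 \<in> Vc k n" by (auto simp: sig_U)
        then show ?thesis by blast
      next
        case V2
        then have "z = sig k (U k 2)" "U k 2 \<in> Vc k n" using k by (auto simp: sig_U)
        then show ?thesis by blast
      qed (use z in auto)
    qed
  qed
qed

lemma case4:
  assumes k: "k \<ge> 4" and n: "n \<ge> 2"
  shows "geometric_realization (independence_complex (insert V2 (insert W2 (insert V1 (insert W1 (Vc k n))))) (Hr_edges k n))
     homeomorphic_space suspension (suspension (geometric_realization (independence_complex (H_verts (k - 2) n) (H_edges (k - 2) n))))"
proof -
  have ne: "Vc k n \<noteq> {}" using in_Vc(1)[of 1 1 k n] by blast
  have J1: "geometric_realization (independence_complex (insert V2 (insert W2 (insert V1 (insert W1 (Vc k n))))) (Hr_edges k n))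
     homeomorphic_space suspension (geometric_realization (independence_complex (insert V1 (insert W1 (Vc k n))) (Hr_edges k n)))"
  proof (rule join_lemma[OF _ _ _ _ _ Hr_edges_dbl])
    show "finite (insert V1 (insert W1 (Vc k n)))" using finite_Vc by simp
    show "{V2, W2} \<in> Hr_edges k n" by (simp add: Hr_edges_iff)
    show "\<forall>x\<in>insert V1 (insert W1 (Vc k n)). {x, V2} \<notin> Hr_edges k n \<and> {x, W2} \<notin> Hr_edges k n"
    proof
      fix x assume "x \<in> insert V1 (insert W1 (Vc k n))"
      then show "{x, V2} \<notin> Hr_edges k n \<and> {x, W2} \<notin> Hr_edges k n"
        using k by (cases x) (auto simp: Hr_edges_iff)
    qed
  qed auto
  have J2: "geometric_realization (independence_complex (insert V1 (insert W1 (Vc k n))) (Hr_edges k n))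
     homeomorphic_space suspension (geometric_realization (independence_complex (Vc k n) (Hr_edges k n)))"
  proof (rule join_lemma[OF finite_Vc _ _ _ _ Hr_edges_dbl _ ne])
    show "{V1, W1} \<in> Hr_edges k n" by (simp add: Hr_edges_iff)
    show "\<forall>x\<in>Vc k n. {x, V1} \<notin> Hr_edges k n \<and> {x, W1} \<notin> Hr_edges k n"
    proof
      fix x assume "x \<in> Vc k n"
      then show "{x, V1} \<notin> Hr_edges k n \<and> {x, W1} \<notin> Hr_edges k n"
        using k by (cases x) (auto simp: Hr_edges_iff)
    qed
  qed auto
  have ISO: "geometric_realization (independence_complex (Vc k n) (Hr_edges k n)) homeomorphic_space
         geometric_realization (independence_complex (H_verts (k - 2) n) (H_edges (k - 2) n))"
  proof (rule iso_lemma[OF sig_bij[OF k n] finite_Vc _ Hr_edges_dbl H_edges_dbl])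
    show "\<forall>x\<in>Vc k n. \<forall>y\<in>Vc k n. ({x, y} \<in> Hr_edges k n) = ({sig k x, sig k y} \<in> H_edges (k - 2) n)"
    proof (intro ballI)
      fix x y assume x: "x \<in> Vc k n" and y: "y \<in> Vc k n"
      obtain i a where xe: "x = U i a" using x by (cases x) auto
      obtain i' b where ye: "y = U i' b" using y by (cases y) auto
      show "({x, y} \<in> Hr_edges k n) = ({sig k x, sig k y} \<in> H_edges (k - 2) n)"
        unfolding Hr_edges_iff H_edges_iff xe ye using sig_edges[OF k n x[unfolded xe] y[unfolded ye]] by simp
    qed
  qed
  have "suspension (geometric_realization (independence_complex (insert V1 (insert W1 (Vc k n))) (Hr_edges k n)))
     homeomorphic_space suspension (suspension (geometric_realization (independence_complex (Vc k n) (Hr_edges k n))))"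
    by (rule susp_homeo[OF J2])
  moreover have "suspension (suspension (geometric_realization (independence_complex (Vc k n) (Hr_edges k n))))
     homeomorphic_space suspension (suspension (geometric_realization (independence_complex (H_verts (k - 2) n) (H_edges (k - 2) n))))"
    by (rule susp_homeo[OF susp_homeo[OF ISO]])
  ultimately show ?thesis by (rule homeomorphic_space_trans[OF J1 homeomorphic_space_trans])
qed


theorem mainTheorem16:
  fixes n :: nat
  assumes "n \<ge> 3"
  shows "(geometric_realization (independence_complex (Hr_verts 2 n) (Hr_edges 2 n))
           homotopy_equivalent_space nsphere 2) \<and>
         (geometric_realization (independence_complex (Hr_verts 3 n) (Hr_edges 3 n))
           homotopy_equivalent_space nsphere 3) \<and>
         (\<forall>k\<ge>4. geometric_realization (independence_complex (Hr_verts k n) (Hr_edges k n))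
           homotopy_equivalent_space
             suspension (suspension (geometric_realization
               (independence_complex (H_verts (k - 2) n) (H_edges (k - 2) n)))))"
proof (intro conjI allI impI)
  have n2: "n \<ge> 2" using assms by simp
  show "geometric_realization (independence_complex (Hr_verts 2 n) (Hr_edges 2 n))
           homotopy_equivalent_space nsphere 2"
  proof -
    have "geometric_realization (independence_complex (Hr_verts 2 n) (Hr_edges 2 n)) homotopy_equivalent_space
         geometric_realization (independence_complex (Hr_verts 2 n - R1 2 n) (Hr_edges 2 n))"
      by (rule step1) simp
    also have "Hr_verts 2 n - R1 2 n = insert V2 (insert W2 (insert V1 (insert W1 (Vc 2 n))))"
      by (rule V_after_step1) (use n2 in simp_all)
    finally show ?thesis
      by (rule homotopy_eqv_trans[OF _ homeomorphic_imp_homotopy_equivalent_space[OF case2[OF n2]]])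
  qed
  show "geometric_realization (independence_complex (Hr_verts 3 n) (Hr_edges 3 n))
           homotopy_equivalent_space nsphere 3"
  proof -
    have "geometric_realization (independence_complex (Hr_verts 3 n) (Hr_edges 3 n)) homotopy_equivalent_space
         geometric_realization (independence_complex (Hr_verts 3 n - R1 3 n) (Hr_edges 3 n))"
      by (rule step1) simp
    also have "Hr_verts 3 n - R1 3 n = insert V2 (insert W2 (insert V1 (insert W1 (Vc 3 n))))"
      by (rule V_after_step1) (use n2 in simp_all)
    finally show ?thesis using case3[OF assms] by (rule homotopy_eqv_trans)
  qed
  fix k :: nat assume k: "k \<ge> 4"
  have "geometric_realization (independence_complex (Hr_verts k n) (Hr_edges k n)) homotopy_equivalent_space
         geometric_realization (independence_complex (Hr_verts k n - R1 k n) (Hr_edges k n))"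
    by (rule step1) (use k in simp)
  also have "Hr_verts k n - R1 k n = insert V2 (insert W2 (insert V1 (insert W1 (Vc k n))))"
    by (rule V_after_step1) (use n2 k in simp_all)
  finally show "geometric_realization (independence_complex (Hr_verts k n) (Hr_edges k n))
           homotopy_equivalent_space
             suspension (suspension (geometric_realization
               (independence_complex (H_verts (k - 2) n) (H_edges (k - 2) n))))"
    by (rule homotopy_eqv_trans[OF _ homeomorphic_imp_homotopy_equivalent_space[OF case4[OF k n2]]])
qed

end
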